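(* Let $N=(P,T,F,M_0)$ be a Petri net with transition set $T=\{a,b,c\}$ (each transition being its own label, i.e. the labelling is injective). If the firing sequence $abbaac$ is enabled at $M_0$, then the firing sequence $aba$ is also enabled at $M_0$. Consequently, no injectively labelled Petri net has exactly the word $abbaac$ and its prefixes as its firing sequences (i.e. the word $abbaac$ is not synthesisable: $a$ cannot be prevented in the state reached after $ab$).
   Context: A Petri net is a tuple $N=(P,T,F,M_0)$ with finite disjoint sets $P$ (places) and $T$ (transitions), a flow function $F\colon (P\times T)\cup(T\times P)\to\mathbb{N}$, and an initial marking $M_0\colon P\to\mathbb{N}$. A transition $t$ is enabled at a marking $M$ if $M(p)\ge F(p,t)$ for all $p\in P$; firing it yields $M'$ with $M'(p)=M(p)-F(p,t)+F(t,p)$. A sequence $t_1t_2\cdots t_n$ is enabled (firable) at $M$ if $t_1$ is enabled at $M$, and successively each $t_{i+1}$ is enabled at the marking reached after firing $t_1\cdots t_i$. *)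

theory Defs
  imports Main
begin

(* The three transitions a, b, c (each transition is its own label). *)
datatype tr = a | b | c

(* A Petri net with place type 'p (finite) and transition set {a,b,c}.
   The flow function F is split into its two parts:
     Fpt p t = F(p,t)   and   Ftp t p = F(t,p). *)

definition enabled :: "('p \<Rightarrow> tr \<Rightarrow> nat) \<Rightarrow> ('p \<Rightarrow> nat) \<Rightarrow> tr \<Rightarrow> bool" where
  "enabled Fpt M t \<longleftrightarrow> (\<forall>p. Fpt p t \<le> M p)"

definition fire :: "('p \<Rightarrow> tr \<Rightarrow> nat) \<Rightarrow> (tr \<Rightarrow> 'p \<Rightarrow> nat) \<Rightarrow> ('p \<Rightarrow> nat) \<Rightarrow> tr \<Rightarrow> ('p \<Rightarrow> nat)" where
  "fire Fpt Ftp M t = (\<lambda>p. M p - Fpt p t + Ftp t p)"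

fun enabled_seq :: "('p \<Rightarrow> tr \<Rightarrow> nat) \<Rightarrow> (tr \<Rightarrow> 'p \<Rightarrow> nat) \<Rightarrow> ('p \<Rightarrow> nat) \<Rightarrow> tr list \<Rightarrow> bool" where
  "enabled_seq Fpt Ftp M [] = True"
| "enabled_seq Fpt Ftp M (t # ts) = (enabled Fpt M t \<and> enabled_seq Fpt Ftp (fire Fpt Ftp M t) ts)"

end

theory Submission
  imports Defs
begin

lemma part1:
  assumes "enabled_seq Fpt Ftp M0 [a, b, b, a, a, c]"
  shows "enabled_seq Fpt Ftp M0 [a, b, a]"
proof -
  have H: "\<And>p. Fpt p a \<le> M0 p \<and> Fpt p b \<le> M0 p - Fpt p a + Ftp a p
     \<and> Fpt p b \<le> M0 p - Fpt p a + Ftp a p - Fpt p b + Ftp b p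
     \<and> Fpt p a \<le> M0 p - Fpt p a + Ftp a p - Fpt p b + Ftp b p - Fpt p b + Ftp b p
     \<and> Fpt p a \<le> M0 p - Fpt p a + Ftp a p - Fpt p b + Ftp b p - Fpt p b + Ftp b p - Fpt p a + Ftp a p"
    using assms unfolding enabled_seq.simps enabled_def fire_def by blast
  have "\<And>p. Fpt p a \<le> M0 p - Fpt p a + Ftp a p - Fpt p b + Ftp b p"
  proof -
    fix p show "Fpt p a \<le> M0 p - Fpt p a + Ftp a p - Fpt p b + Ftp b p"
      using H[of p] by linarith
  qed
  then show ?thesis using H unfolding enabled_seq.simps enabled_def fire_def by blast
qed

theorem mainTheorem2:
  fixes Fpt :: "'p::finite \<Rightarrow> tr \<Rightarrow> nat" and Ftp :: "tr \<Rightarrow> 'p \<Rightarrow> nat" and M0 :: "'p \<Rightarrow> nat"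
  shows "(enabled_seq Fpt Ftp M0 [a, b, b, a, a, c] \<longrightarrow> enabled_seq Fpt Ftp M0 [a, b, a])
       \<and> {w. enabled_seq Fpt Ftp M0 w} \<noteq> {take k [a, b, b, a, a, c] | k. True}"
proof
  show "enabled_seq Fpt Ftp M0 [a, b, b, a, a, c] \<longrightarrow> enabled_seq Fpt Ftp M0 [a, b, a]"
    using part1 by blast
  show "{w. enabled_seq Fpt Ftp M0 w} \<noteq> {take k [a, b, b, a, a, c] | k. True}"
  proof
    assume E: "{w. enabled_seq Fpt Ftp M0 w} = {take k [a, b, b, a, a, c] | k. True}"
    have "[a, b, b, a, a, c] \<in> {take k [a, b, b, a, a, c] | k. True}"
      by (rule CollectI, rule exI[of _ 6], simp)
    then have "enabled_seq Fpt Ftp M0 [a, b, b, a, a, c]" using E by blast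
    then have "[a, b, a] \<in> {take k [a, b, b, a, a, c] | k. True}" using part1 E by blast
    then obtain k where "[a, b, a] = take k [a, b, b, a, a, c]" by blast
    moreover have "take k [a, b, b, a, a, c] \<noteq> [a, b, a]"
      by (cases k; cases "k - 1"; cases "k - 2"; cases "k - 3"; simp)
    ultimately show False by simp
  qed
qed

end
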